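(* Let $x_0\in\mathbb{R}^2$, $r_0>0$, and let $K$ be a relatively closed subset of $B(x_0,r_0)$ containing $x_0$. If $K$ separates $B(x_0,r_0)$, then $\beta^{\rm bil}_K(x_0,r_0)\le4\beta_K(x_0,r_0)$.
   Context: $B(x,r)$ is the open ball. Flatness: $\beta_K(x_0,r_0)=r_0^{-1}\inf_\ell\sup_{y\in K\cap B(x_0,r_0)}\mathrm{dist}(y,\ell)$, infimum over lines $\ell$ through $x_0$ (attained); $\nu(x_0,r_0)$ is a unit normal of a chosen minimizing line, and $D^\pm_t(x_0,r_0)=\{x\in B(x_0,r_0):\pm(x-x_0)\cdot\nu(x_0,r_0)>t\}$. Bilateral flatness: $\beta^{\rm bil}_K(x_0,r_0)=r_0^{-1}\inf_\ell\max\{\sup_{y\in K\cap B(x_0,r_0)}\mathrm{dist}(y,\ell),\sup_{y\in\ell\cap B(x_0,r_0)}\mathrm{dist}(y,K)\}$, infimum over lines through $x_0$. $K$ separates $B(x_0,r_0)$ if $\beta:=\beta_K(x_0,r_0)\le1/2$ and $D^+_{\beta r_0}(x_0,r_0)$, $D^-_{\beta r_0}(x_0,r_0)$ lie in distinct connected components of $B(x_0,r_0)\setminus K$. *)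

theory Defs
  imports "HOL-Analysis.Analysis"
begin

type_synonym R2 = "real ^ 2"

definition line_thru :: "R2 \<Rightarrow> R2 \<Rightarrow> R2 set" where
  "line_thru x0 nu = {x. (x - x0) \<bullet> nu = 0}"

definition dev :: "R2 set \<Rightarrow> R2 \<Rightarrow> real \<Rightarrow> R2 \<Rightarrow> real" where
  "dev K x0 r0 nu = (SUP y\<in>K \<inter> ball x0 r0. infdist y (line_thru x0 nu))"

definition beta :: "R2 set \<Rightarrow> R2 \<Rightarrow> real \<Rightarrow> real" where
  "beta K x0 r0 = (INF nu\<in>sphere 0 1. dev K x0 r0 nu) / r0"

definition beta_bil :: "R2 set \<Rightarrow> R2 \<Rightarrow> real \<Rightarrow> real" where
  "beta_bil K x0 r0 = (INF nu\<in>sphere 0 1.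
      max (dev K x0 r0 nu) (SUP y\<in>line_thru x0 nu \<inter> ball x0 r0. infdist y K)) / r0"

definition minimizing_normal :: "R2 set \<Rightarrow> R2 \<Rightarrow> real \<Rightarrow> R2 \<Rightarrow> bool" where
  "minimizing_normal K x0 r0 nu \<longleftrightarrow> norm nu = 1 \<and> dev K x0 r0 nu = r0 * beta K x0 r0"

definition Dplus :: "R2 \<Rightarrow> real \<Rightarrow> R2 \<Rightarrow> real \<Rightarrow> R2 set" where
  "Dplus x0 r0 nu t = {x \<in> ball x0 r0. (x - x0) \<bullet> nu > t}"

definition Dminus :: "R2 \<Rightarrow> real \<Rightarrow> R2 \<Rightarrow> real \<Rightarrow> R2 set" where
  "Dminus x0 r0 nu t = {x \<in> ball x0 r0. - ((x - x0) \<bullet> nu) > t}"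

text \<open>K separates B(x0,r0), w.r.t. a chosen minimizing line (the theorem is then
  required for every such choice).\<close>
definition separates :: "R2 set \<Rightarrow> R2 \<Rightarrow> real \<Rightarrow> R2 \<Rightarrow> bool" where
  "separates K x0 r0 nu \<longleftrightarrow> beta K x0 r0 \<le> 1/2 \<and>
     (\<exists>C1\<in>components (ball x0 r0 - K). \<exists>C2\<in>components (ball x0 r0 - K).
        C1 \<noteq> C2 \<and> Dplus x0 r0 nu (beta K x0 r0 * r0) \<subseteq> C1
        \<and> Dminus x0 r0 nu (beta K x0 r0 * r0) \<subseteq> C2)"

end

theory Submission imports Defs begin

lemma geo:
  fixes y x0 nu :: R2
  assumes nu: "norm nu = 1" and orth: "(y - x0) \<bullet> nu = 0" and d: "0 < d" "d \<le> norm (y - x0)"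
    and a: "norm (y - x0) < r0" and s: "s\<^sup>2 = d\<^sup>2 / 4"
  defines "z \<equiv> y - (d / (2 * norm (y - x0))) *\<^sub>R (y - x0) + s *\<^sub>R nu"
  shows "dist y z < d" "dist x0 z < r0" "(z - x0) \<bullet> nu = s"
proof -
  define a where "a = norm (y - x0)"
  define c where "c = d / (2 * a)"
  have apos: "a > 0" using d a_def by linarith
  have ca: "c * a = d / 2" using apos by (simp add: c_def)
  have nn: "nu \<bullet> nu = 1" using nu by (simp add: norm_eq_1)
  have o1: "orthogonal (c *\<^sub>R (y - x0)) (- s *\<^sub>R nu)" using orth
    by (simp add: orthogonal_def)
  have "y - z = c *\<^sub>R (y - x0) + (- s *\<^sub>R nu)" by (simp add: z_def c_def a_def)
  hence "(norm (y - z))\<^sup>2 = (c * a)\<^sup>2 + s\<^sup>2"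
    using norm_add_Pythagorean[OF o1] nu by (simp add: a_def power_mult_distrib)
  also have "\<dots> = d\<^sup>2 / 2"
  proof -
    have "(c * a)\<^sup>2 = d\<^sup>2 / 4" unfolding ca by (simp add: power_divide)
    thus ?thesis using s by simp
  qed
  also have "\<dots> < d\<^sup>2" using d by simp
  finally have "norm (y - z) < d" using d by (smt (verit) power_mono norm_ge_zero)
  thus "dist y z < d" by (simp add: dist_norm)
  have o2: "orthogonal ((1 - c) *\<^sub>R (y - x0)) (s *\<^sub>R nu)" using orth
    by (simp add: orthogonal_def)
  have "z - x0 = (1 - c) *\<^sub>R (y - x0) + s *\<^sub>R nu" by (simp add: z_def c_def a_def algebra_simps)
  hence e0: "(norm (z - x0))\<^sup>2 = ((1 - c) * a)\<^sup>2 + s\<^sup>2"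
    using norm_add_Pythagorean[OF o2] nu by (simp add: a_def power_mult_distrib)
  have "(1 - c) * a = a - c * a" by (simp add: algebra_simps)
  hence e: "(norm (z - x0))\<^sup>2 = (a - c * a)\<^sup>2 + s\<^sup>2" using e0 by simp
  have hh: "a - c * a = a - d/2" using ca by simp
  have "(a - c * a)\<^sup>2 + s\<^sup>2 = (a - d/2)\<^sup>2 + d\<^sup>2/4" by (simp only: hh s)
  also have "\<dots> < r0\<^sup>2"
  proof -
    have "a - d/2 \<ge> 0" "a - d/2 < r0 - d/2" using d a a_def by auto
    hence "(a - d/2)\<^sup>2 \<le> (r0 - d/2)\<^sup>2" by (intro power_mono) auto
    moreover have "(r0 - d/2)\<^sup>2 + d\<^sup>2/4 < r0\<^sup>2" using d a a_def
      by (simp add: power2_eq_square field_simps)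
    ultimately show ?thesis by linarith
  qed
  finally have "norm (z - x0) < r0" using e a apos a_def
    by (smt (verit) power_mono norm_ge_zero)
  thus "dist x0 z < r0" by (simp add: dist_norm norm_minus_commute)
  have "(z - x0) \<bullet> nu = (1 - c) * ((y - x0) \<bullet> nu) + s * (nu \<bullet> nu)"
    using \<open>z - x0 = _\<close> by (simp add: inner_add_left)
  thus "(z - x0) \<bullet> nu = s" using orth nn by simp
qed

lemma dev_nonneg:
  fixes x0 nu :: R2 and K
  assumes "x0 \<in> K" "r0 > 0"
  shows "0 \<le> dev K x0 r0 nu"
proof -
  have x0L: "x0 \<in> line_thru x0 nu" by (simp add: line_thru_def)
  have bdd: "bdd_above ((\<lambda>y. infdist y (line_thru x0 nu)) ` (K \<inter> ball x0 r0))"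
  proof (rule bdd_aboveI2)
    fix y assume "y \<in> K \<inter> ball x0 r0"
    hence "infdist y (line_thru x0 nu) \<le> dist y x0" by (intro infdist_le[OF x0L])
    thus "infdist y (line_thru x0 nu) \<le> r0" using \<open>y \<in> K \<inter> ball x0 r0\<close>
      by (simp add: dist_commute)
  qed
  have "x0 \<in> K \<inter> ball x0 r0" using assms by simp
  hence "infdist x0 (line_thru x0 nu) \<le> dev K x0 r0 nu"
    unfolding dev_def by (rule cSUP_upper[OF _ bdd])
  thus ?thesis using infdist_nonneg by (metis order_trans)
qed

theorem lemma4p2:
  fixes x0 :: R2 and r0 :: real and K :: "R2 set" and nu :: R2
  assumes "r0 > 0"
    and "K \<subseteq> ball x0 r0" and "closedin (top_of_set (ball x0 r0)) K"
    and "x0 \<in> K"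
    and "minimizing_normal K x0 r0 nu"
    and "separates K x0 r0 nu"
  shows "beta_bil K x0 r0 \<le> 4 * beta K x0 r0"
proof -
  define b where "b = r0 * beta K x0 r0"
  have nu1: "norm nu = 1" and devb: "dev K x0 r0 nu = b"
    using assms(5) by (auto simp: minimizing_normal_def b_def)
  have b0: "b \<ge> 0" using dev_nonneg[OF assms(4,1), of nu] devb by simp
  obtain C1 C2 where C: "C1 \<in> components (ball x0 r0 - K)" "C2 \<in> components (ball x0 r0 - K)"
    "C1 \<noteq> C2" "Dplus x0 r0 nu b \<subseteq> C1" "Dminus x0 r0 nu b \<subseteq> C2"
    using assms(6) unfolding separates_def b_def by (auto simp: mult.commute)
  have main: "infdist y K \<le> 4 * b" if y: "y \<in> line_thru x0 nu \<inter> ball x0 r0" for y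
  proof (rule ccontr)
    assume "\<not> ?thesis"
    hence dgt: "infdist y K > 4 * b" by simp
    define d where "d = infdist y K"
    have dpos: "d > 0" using dgt b0 d_def by simp
    have dle: "d \<le> norm (y - x0)" unfolding d_def
      using infdist_le[OF assms(4), of y] by (simp add: dist_norm)
    have orth: "(y - x0) \<bullet> nu = 0" using y by (simp add: line_thru_def)
    have ylt: "norm (y - x0) < r0" using y by (simp add: dist_norm norm_minus_commute)
    define zp where "zp = y - (d / (2 * norm (y - x0))) *\<^sub>R (y - x0) + (d/2) *\<^sub>R nu"
    define zm where "zm = y - (d / (2 * norm (y - x0))) *\<^sub>R (y - x0) + (-(d/2)) *\<^sub>R nu"
    have sp: "(d/2)\<^sup>2 = d\<^sup>2/4" "(-(d/2))\<^sup>2 = d\<^sup>2/4" by (simp_all add: power_divide)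
    note gp = geo[OF nu1 orth dpos dle ylt sp(1)]
    note gm = geo[OF nu1 orth dpos dle ylt sp(2)]
    define S where "S = ball y d \<inter> ball x0 r0"
    have conv: "convex S" unfolding S_def by (intro convex_Int convex_ball)
    have inS: "zp \<in> S" "zm \<in> S" using gp gm by (auto simp: S_def zp_def zm_def)
    have seg: "closed_segment zp zm \<subseteq> S" using conv inS by (simp add: closed_segment_subset)
    have SK: "S \<subseteq> ball x0 r0 - K"
    proof
      fix z assume z: "z \<in> S"
      show "z \<in> ball x0 r0 - K"
      proof -
        have "z \<notin> K"
        proof
          assume "z \<in> K"
          hence "infdist y K \<le> dist y z" by (rule infdist_le)
          thus False using z by (simp add: S_def d_def)
        qed
        thus ?thesis using z by (simp add: S_def)
      qed
    qed
    have "zp \<in> Dplus x0 r0 nu b" using gp dpos dgt d_def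
      by (auto simp: Dplus_def zp_def dist_commute)
    hence zp1: "zp \<in> C1" using C by auto
    have "zm \<in> Dminus x0 r0 nu b" using gm dpos dgt d_def
      by (auto simp: Dminus_def zm_def dist_commute)
    hence zm2: "zm \<in> C2" using C by auto
    have "closed_segment zp zm \<subseteq> C1"
      by (rule components_maximal[OF C(1)]) (use seg SK zp1 in auto)
    hence "zm \<in> C1 \<inter> C2" using zm2 by auto
    thus False using components_nonoverlap[OF C(1,2)] C(3) by auto
  qed
  have sup: "(SUP y\<in>line_thru x0 nu \<inter> ball x0 r0. infdist y K) \<le> 4 * b"
  proof (rule cSUP_least)
    have "x0 \<in> line_thru x0 nu \<inter> ball x0 r0" using assms(1) by (simp add: line_thru_def)
    thus "line_thru x0 nu \<inter> ball x0 r0 \<noteq> {}" by blast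
  qed (use main in auto)
  have mx: "max (dev K x0 r0 nu) (SUP y\<in>line_thru x0 nu \<inter> ball x0 r0. infdist y K) \<le> 4 * b"
    using sup devb b0 by simp
  have "(INF nu\<in>sphere 0 1. max (dev K x0 r0 nu) (SUP y\<in>line_thru x0 nu \<inter> ball x0 r0. infdist y K))
        \<le> max (dev K x0 r0 nu) (SUP y\<in>line_thru x0 nu \<inter> ball x0 r0. infdist y K)"
  proof (rule cINF_lower)
    show "nu \<in> sphere 0 1" using nu1 by simp
    show "bdd_below ((\<lambda>nu. max (dev K x0 r0 nu) (SUP y\<in>line_thru x0 nu \<inter> ball x0 r0. infdist y K)) ` sphere 0 1)"
      by (rule bdd_belowI2[of _ 0]) (use dev_nonneg[OF assms(4,1)] in \<open>simp add: le_max_iff_disj\<close>)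
  qed
  hence "beta_bil K x0 r0 \<le> 4 * b / r0" unfolding beta_bil_def using mx assms(1)
    by (intro divide_right_mono) auto
  thus ?thesis using assms(1) by (simp add: b_def)
qed

end
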